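(* For any flats $A,B,C$ in a proaffine regular liner $X$: if $A$ is subparallel to $B$ and $B$ is subparallel to $C$, then $A$ is subparallel to $C$; and if $A\parallel B$ and $B\parallel C$, then $A\parallel C$.
   Context: A liner is a set $X$ of points with a family of subsets called lines such that any two distinct points lie in a unique line and every line contains at least two points. For distinct $x,y$, $\overline{xy}$ is the line through them and $\overline{xx}:=\{x\}$. A set is flat if it contains $\overline{xy}$ for all its distinct points; $\overline A$ is the smallest flat containing $A$. For $A\subseteq X$, $y\in X$ put $\overline{Ay}=\bigcup_{a\in A}\overline{ay}$. $X$ is proaffine if for all $o,x,y\in X$ and $p\in\overline{xy}\setminus\overline{ox}$ there exists $u\in\overline{oy}$ such that $\overline{vp}\cap\overline{ox}\ne\varnothing$ for every $v\in\overline{oy}\setminus\{u\}$. $X$ is regular if for every flat $A$ and points $a\in A$, $b\in X\setminus A$, $\overline{A\cup\{b\}}=\bigcup_{y\in\overline{ab}}\overline{Ay}$. A flat $A$ is subparallel to a flat $B$ if $A\subseteq\overline{\{a\}\cup B}$ for every $a\in A$; flats $A,B$ are parallel, $A\parallel B$, if $A$ is subparallel to $B$ and $B$ is subparallel to $A$. *)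

theory Defs
  imports Main
begin

definition liner :: "'a set \<Rightarrow> 'a set set \<Rightarrow> bool" where
  "liner X L \<longleftrightarrow>
     (\<forall>l\<in>L. l \<subseteq> X \<and> (\<exists>x y. x \<noteq> y \<and> x \<in> l \<and> y \<in> l)) \<and>
     (\<forall>x\<in>X. \<forall>y\<in>X. x \<noteq> y \<longrightarrow> (\<exists>!l. l \<in> L \<and> x \<in> l \<and> y \<in> l))"

definition lineThrough :: "'a set set \<Rightarrow> 'a \<Rightarrow> 'a \<Rightarrow> 'a set" where
  "lineThrough L x y = (if x = y then {x} else (THE l. l \<in> L \<and> x \<in> l \<and> y \<in> l))"

definition flat :: "'a set \<Rightarrow> 'a set set \<Rightarrow> 'a set \<Rightarrow> bool" where
  "flat X L A \<longleftrightarrow> A \<subseteq> X \<and> (\<forall>x\<in>A. \<forall>y\<in>A. lineThrough L x y \<subseteq> A)"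

definition flat_hull :: "'a set \<Rightarrow> 'a set set \<Rightarrow> 'a set \<Rightarrow> 'a set" where
  "flat_hull X L A = \<Inter>{F. flat X L F \<and> A \<subseteq> F}"

definition cone :: "'a set set \<Rightarrow> 'a set \<Rightarrow> 'a \<Rightarrow> 'a set" where
  "cone L A y = (\<Union>a\<in>A. lineThrough L a y)"

definition proaffine :: "'a set \<Rightarrow> 'a set set \<Rightarrow> bool" where
  "proaffine X L \<longleftrightarrow>
     (\<forall>o'\<in>X. \<forall>x\<in>X. \<forall>y\<in>X. \<forall>p \<in> lineThrough L x y - lineThrough L o' x.
        \<exists>u \<in> lineThrough L o' y. \<forall>v \<in> lineThrough L o' y - {u}.
          lineThrough L v p \<inter> lineThrough L o' x \<noteq> {})"

definition regular :: "'a set \<Rightarrow> 'a set set \<Rightarrow> bool" where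
  "regular X L \<longleftrightarrow>
     (\<forall>A. flat X L A \<longrightarrow> (\<forall>a\<in>A. \<forall>b \<in> X - A.
        flat_hull X L (A \<union> {b}) = (\<Union>y \<in> lineThrough L a b. cone L A y)))"

definition subparallel :: "'a set \<Rightarrow> 'a set set \<Rightarrow> 'a set \<Rightarrow> 'a set \<Rightarrow> bool" where
  "subparallel X L A B \<longleftrightarrow> (\<forall>a\<in>A. A \<subseteq> flat_hull X L ({a} \<union> B))"

definition parallel :: "'a set \<Rightarrow> 'a set set \<Rightarrow> 'a set \<Rightarrow> 'a set \<Rightarrow> bool" where
  "parallel X L A B \<longleftrightarrow> subparallel X L A B \<and> subparallel X L B A"

end

theory Submission
  imports Defs
begin

locale plr =
  fixes X :: "'a set" and L :: "'a set set"
  assumes lin: "liner X L" and pa: "proaffine X L" and reg: "regular X L"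
begin

abbreviation ln where "ln \<equiv> lineThrough L"
abbreviation H where "H \<equiv> flat_hull X L"
abbreviation fl where "fl \<equiv> flat X L"

lemma L_sub: "l \<in> L \<Longrightarrow> l \<subseteq> X"
  using lin unfolding liner_def by blast

lemma lin_ex1:
  assumes "x \<in> X" "y \<in> X" "x \<noteq> y"
  shows "\<exists>!l. l \<in> L \<and> x \<in> l \<and> y \<in> l"
proof -
  have H: "\<forall>x\<in>X. \<forall>y\<in>X. x \<noteq> y \<longrightarrow> (\<exists>!l. l \<in> L \<and> x \<in> l \<and> y \<in> l)"
    using lin unfolding liner_def by (rule conjunct2)
  show ?thesis by (rule H[rule_format, OF assms])
qed

lemma line_L:
  assumes "x \<in> X" "y \<in> X" "x \<noteq> y"
  shows "ln x y \<in> L \<and> x \<in> ln x y \<and> y \<in> ln x y"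
proof -
  from assms have "\<exists>!l. l \<in> L \<and> x \<in> l \<and> y \<in> l" by (rule lin_ex1)
  then have "(THE l. l \<in> L \<and> x \<in> l \<and> y \<in> l) \<in> L \<and> x \<in> (THE l. l \<in> L \<and> x \<in> l \<and> y \<in> l) \<and> y \<in> (THE l. l \<in> L \<and> x \<in> l \<and> y \<in> l)"
    by (rule theI')
  then show ?thesis using assms unfolding lineThrough_def by simp
qed

lemma line_unique:
  assumes "l \<in> L" "x \<in> l" "y \<in> l" "x \<noteq> y"
  shows "ln x y = l"
proof -
  have xy: "x \<in> X" "y \<in> X" using assms L_sub by auto
  have "\<exists>!l. l \<in> L \<and> x \<in> l \<and> y \<in> l" using xy assms(4) by (rule lin_ex1)
  then have "(THE l. l \<in> L \<and> x \<in> l \<and> y \<in> l) = l" using assms by (intro the1_equality) auto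
  then show ?thesis using assms unfolding lineThrough_def by simp
qed

lemma line_same[simp]: "ln x x = {x}"
  unfolding lineThrough_def by simp

lemma line_mem1: "x \<in> X \<Longrightarrow> y \<in> X \<Longrightarrow> x \<in> ln x y"
  using line_L by (cases "x = y") auto

lemma line_mem2: "x \<in> X \<Longrightarrow> y \<in> X \<Longrightarrow> y \<in> ln x y"
  using line_L by (cases "x = y") auto

lemma line_X: "x \<in> X \<Longrightarrow> y \<in> X \<Longrightarrow> ln x y \<subseteq> X"
  using line_L L_sub by (cases "x = y") auto

lemma line_sym: "x \<in> X \<Longrightarrow> y \<in> X \<Longrightarrow> ln x y = ln y x"
proof (cases "x = y")
  case False
  assume xy: "x \<in> X" "y \<in> X"
  have "ln x y \<in> L \<and> x \<in> ln x y \<and> y \<in> ln x y" using line_L xy False by blast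
  then have "ln y x = ln x y" using line_unique[of "ln x y" y x] False by blast
  then show ?thesis by simp
qed simp

lemma line_eq2:
  assumes "p \<in> X" "q \<in> X" "p \<noteq> q" "u \<in> ln p q" "v \<in> ln p q" "u \<noteq> v"
  shows "ln u v = ln p q"
proof -
  have "ln p q \<in> L" using line_L assms by blast
  then show ?thesis using line_unique[of "ln p q" u v] assms by blast
qed

lemma line_eq:
  assumes "x \<in> X" "y \<in> X" "z \<in> ln x y" "z \<noteq> x"
  shows "ln x z = ln x y"
proof -
  have "x \<noteq> y" using assms by auto
  moreover have "x \<in> ln x y" using line_mem1 assms by blast
  ultimately show ?thesis using line_eq2[of x y x z] assms by blast
qed

lemma line_flat: "x \<in> X \<Longrightarrow> y \<in> X \<Longrightarrow> fl (ln x y)"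
  unfolding flat_def
proof (intro conjI ballI)
  assume xy: "x \<in> X" "y \<in> X"
  show "ln x y \<subseteq> X" using xy line_X by auto
  fix u v assume uv: "u \<in> ln x y" "v \<in> ln x y"
  show "ln u v \<subseteq> ln x y"
  proof (cases "u = v")
    case True then show ?thesis using uv by simp
  next
    case False
    then have "x \<noteq> y" using uv by auto
    then have "ln u v = ln x y" using line_eq2[OF xy _ uv False] by blast
    then show ?thesis by simp
  qed
qed

lemma flat_line: "fl F \<Longrightarrow> x \<in> F \<Longrightarrow> y \<in> F \<Longrightarrow> ln x y \<subseteq> F"
  unfolding flat_def by blast

lemma flat_X: "fl F \<Longrightarrow> F \<subseteq> X"
  unfolding flat_def by blast

lemma X_flat: "fl X"
  unfolding flat_def using line_X by simp

lemma H_sub: "S \<subseteq> H S"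
  unfolding flat_hull_def by blast

lemma H_mem[intro]: "x \<in> S \<Longrightarrow> x \<in> H S"
  using H_sub by blast

lemma H_ins1[simp]: "x \<in> H (insert x S)"
  using H_sub by blast

lemma H_ins2[simp]: "y \<in> S \<Longrightarrow> y \<in> H (insert x S)"
  using H_sub by blast

lemma H_least: "fl F \<Longrightarrow> S \<subseteq> F \<Longrightarrow> H S \<subseteq> F"
  unfolding flat_hull_def by blast

lemma H_X: "S \<subseteq> X \<Longrightarrow> H S \<subseteq> X"
  using H_least X_flat by blast

lemma H_flat: "S \<subseteq> X \<Longrightarrow> fl (H S)"
proof -
  assume S: "S \<subseteq> X"
  show ?thesis unfolding flat_def
  proof (intro conjI ballI)
    show "H S \<subseteq> X" using H_X S .
    fix x y assume xy: "x \<in> H S" "y \<in> H S"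
    show "ln x y \<subseteq> H S"
      unfolding flat_hull_def
    proof (rule Inter_greatest)
      fix F assume "F \<in> {F. fl F \<and> S \<subseteq> F}"
      then have F: "fl F" "S \<subseteq> F" by auto
      then have "x \<in> F" "y \<in> F" using xy H_least by auto
      then show "ln x y \<subseteq> F" using F flat_line by auto
    qed
  qed
qed

lemma H_mono: "S \<subseteq> T \<Longrightarrow> H S \<subseteq> H T"
  unfolding flat_hull_def by blast

lemma H_flat_eq: "fl F \<Longrightarrow> H F = F"
  using H_least H_sub by blast

lemma H_single: "x \<in> X \<Longrightarrow> H {x} = {x}"
proof -
  assume x: "x \<in> X"
  have "fl {x}" unfolding flat_def using x by auto
  then show ?thesis using H_flat_eq by blast
qed

lemma H_line: "S \<subseteq> X \<Longrightarrow> x \<in> H S \<Longrightarrow> y \<in> H S \<Longrightarrow> ln x y \<subseteq> H S"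
  using H_flat flat_line by blast

lemma reg_dec:
  assumes "fl F" "a \<in> F" "b \<in> X" "b \<notin> F" "z \<in> H (F \<union> {b})"
  shows "\<exists>y\<in>ln a b. \<exists>f\<in>F. z \<in> ln f y"
proof -
  from reg assms have "H (F \<union> {b}) = (\<Union>y \<in> ln a b. cone L F y)"
    unfolding regular_def by blast
  then show ?thesis using assms(5) unfolding cone_def by auto
qed

lemma exchange:
  assumes F: "fl F" and b: "b \<in> X" and z: "z \<in> H (F \<union> {b})" "z \<notin> F"
  shows "b \<in> H (F \<union> {z})"
proof -
  have FX: "F \<subseteq> X" using F flat_X by auto
  have bF: "b \<notin> F"
  proof
    assume "b \<in> F" then have "F \<union> {b} = F" by auto
    then show False using z H_flat_eq F by auto
  qed
  have zX: "z \<in> X" using z H_X[of "F \<union> {b}"] FX b by blast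
  have Hz: "fl (H (F \<union> {z}))" using H_flat FX zX by auto
  show ?thesis
  proof (cases "F = {}")
    case True then show ?thesis using z H_single b by auto
  next
    case False
    then obtain a where a: "a \<in> F" by auto
    then obtain y f where y: "y \<in> ln a b" and f: "f \<in> F" and zf: "z \<in> ln f y"
      using reg_dec[OF F a b bF z(1)] by blast
    have aX: "a \<in> X" using a FX by auto
    have fX: "f \<in> X" using f FX by auto
    have yX: "y \<in> X" using y line_X aX b by auto
    have zf': "z \<noteq> f" using z f by auto
    have yf: "y \<noteq> f" using zf zf' by auto
    have "ln f z = ln f y" using line_eq[OF fX yX zf zf'] .
    then have "y \<in> ln f z" using line_mem2 fX yX by auto
    moreover have "ln f z \<subseteq> H (F \<union> {z})" using H_line FX zX f H_sub by (intro H_line) auto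
    ultimately have yH: "y \<in> H (F \<union> {z})" by auto
    have "y \<notin> F"
    proof
      assume "y \<in> F" then have "ln f y \<subseteq> F" using F f flat_line by auto
      then show False using zf z by auto
    qed
    then have ya: "y \<noteq> a" using a by auto
    have "ln a y = ln a b" using line_eq[OF aX b y] ya by auto
    then have "b \<in> ln a y" using line_mem2 aX b by auto
    moreover have "ln a y \<subseteq> H (F \<union> {z})" using H_line FX zX a H_sub yH by (intro H_line) auto
    ultimately show ?thesis by auto
  qed
qed

lemma exch_eq:
  assumes F: "fl F" and b: "b \<in> X" and z: "z \<in> H (F \<union> {b})" "z \<notin> F"
  shows "H (F \<union> {z}) = H (F \<union> {b})"
proof -
  have FX: "F \<subseteq> X" using F flat_X by auto
  have zX: "z \<in> X" using z H_X[of "F \<union> {b}"] FX b by blast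
  have 1: "b \<in> H (F \<union> {z})" using exchange assms by blast
  show ?thesis
  proof
    show "H (F \<union> {z}) \<subseteq> H (F \<union> {b})"
      using H_least[OF H_flat, of "F \<union> {b}" "F \<union> {z}"] FX b z H_sub by blast
    show "H (F \<union> {b}) \<subseteq> H (F \<union> {z})"
      using H_least[OF H_flat, of "F \<union> {z}" "F \<union> {b}"] FX zX 1 H_sub by blast
  qed
qed

lemma H2_eq:
  assumes "S \<subseteq> X" "T \<subseteq> X" "S \<subseteq> H T" "T \<subseteq> H S"
  shows "H S = H T"
  using H_least[OF H_flat] assms by (meson subset_antisym)

lemma playfair:
  assumes d1: "d1 \<in> X" and d2: "d2 \<in> X" and d12: "d1 \<noteq> d2"
  and e: "e \<in> X" "e \<notin> ln d1 d2"
  and x1: "x1 \<in> H (ln d1 d2 \<union> {e})" "x1 \<noteq> e"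
  and y1: "y1 \<in> H (ln d1 d2 \<union> {e})" "y1 \<notin> ln e x1"
  and dA: "ln e x1 \<inter> ln d1 d2 = {}" and dE: "ln e y1 \<inter> ln d1 d2 = {}"
  shows False
proof -
  define D where "D = ln d1 d2"
  define P where "P = H (D \<union> {e})"
  define A where "A = ln e x1"
  define E where "E = ln e y1"
  have DX: "D \<subseteq> X" using D_def line_X d1 d2 by auto
  have PX: "P \<subseteq> X" unfolding P_def using DX e H_X by auto
  have Pf: "fl P" unfolding P_def using DX e H_flat by auto
  have x1X: "x1 \<in> X" using x1 PX P_def D_def by auto
  have y1X: "y1 \<in> X" using y1 PX P_def D_def by auto
  have Df: "fl D" using D_def line_flat d1 d2 by auto
  have Af: "fl A" using A_def line_flat e x1X by auto
  have Ef: "fl E" using E_def line_flat e y1X by auto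
  have eA: "e \<in> A" "x1 \<in> A" using A_def line_mem1 line_mem2 e x1X by auto
  have eE: "e \<in> E" "y1 \<in> E" using E_def line_mem1 line_mem2 e y1X by auto
  have d1D: "d1 \<in> D" "d2 \<in> D" using D_def line_mem1 line_mem2 d1 d2 by auto
  have eD: "e \<notin> D" using e D_def by auto
  have DP: "D \<subseteq> P" "e \<in> P" unfolding P_def using H_sub[of "D \<union> {e}"] by auto
  have AP: "A \<subseteq> P" using flat_line[OF Pf] DP x1 A_def P_def D_def by auto
  have AD: "A \<inter> D = {}" using dA A_def D_def by auto
  have ED: "E \<inter> D = {}" using dE E_def D_def by auto
  have y1A: "y1 \<notin> A" using y1 A_def by auto
  have AE: "z = e" if "z \<in> A" "z \<in> E" for z
  proof (rule ccontr)
    assume ze: "z \<noteq> e"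
    have "ln e z = A" using line_eq[OF e(1) x1X] that ze A_def by auto
    moreover have "ln e z = E" using line_eq[OF e(1) y1X] that ze E_def by auto
    ultimately show False using eE y1A by auto
  qed
  define T where "T = ln d1 e"
  have Tf: "fl T" using T_def line_flat d1 e by auto
  have TX: "T \<subseteq> X" using Tf flat_X by auto
  have Tm: "d1 \<in> T" "e \<in> T" using T_def line_mem1 line_mem2 d1 e by auto
  have PT: "P = H (T \<union> {d2})"
  proof -
    have "D \<union> {e} \<subseteq> H (T \<union> {d2})"
    proof -
      have "d1 \<in> H (T \<union> {d2})" "d2 \<in> H (T \<union> {d2})" "e \<in> H (T \<union> {d2})"
        using Tm H_sub by auto
      then have "D \<subseteq> H (T \<union> {d2})" using D_def H_line TX d2 by auto
      then show ?thesis using Tm H_sub by auto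
    qed
    moreover have "T \<union> {d2} \<subseteq> P" using flat_line[OF Pf] DP d1D T_def by auto
    ultimately show ?thesis unfolding P_def
      by (intro H2_eq) (use DX e TX d2 P_def in auto)
  qed
  have x1T: "x1 \<notin> T"
  proof
    assume "x1 \<in> T"
    then have "x1 \<in> ln e d1" using T_def line_sym d1 e by auto
    then have "ln e x1 = ln e d1" using line_eq[OF e(1) d1] x1(2) by auto
    then have "d1 \<in> A" using A_def line_mem2 e d1 by auto
    then show False using AD d1D by auto
  qed
  have "H (T \<union> {x1}) = P" using exch_eq[OF Tf d2] x1T x1 PT P_def D_def by auto
  moreover have "H (T \<union> {x1}) = H (A \<union> {d1})"
  proof (rule H2_eq)
    show "T \<union> {x1} \<subseteq> X" "A \<union> {d1} \<subseteq> X" using TX x1X Af flat_X d1 by auto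
    have "d1 \<in> H (A \<union> {d1})" "e \<in> H (A \<union> {d1})" using eA H_sub by auto
    then have "T \<subseteq> H (A \<union> {d1})" using T_def H_line Af flat_X d1 by auto
    then show "T \<union> {x1} \<subseteq> H (A \<union> {d1})" using eA H_sub by auto
    have "x1 \<in> H (T \<union> {x1})" "e \<in> H (T \<union> {x1})" using Tm H_sub by auto
    then have "A \<subseteq> H (T \<union> {x1})" using A_def H_line TX x1X by auto
    then show "A \<union> {d1} \<subseteq> H (T \<union> {x1})" using Tm H_sub by auto
  qed
  ultimately have PA: "P = H (A \<union> {d1})" by simp
  have "H (A \<union> {y1}) = P" using exch_eq[OF Af d1] y1A y1 PA P_def D_def by auto
  then have d1Ay: "d1 \<in> H (A \<union> {y1})" using DP d1D by auto
  have y1nA: "y1 \<notin> A" by (fact y1A)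
  obtain y f where y: "y \<in> ln e y1" and f: "f \<in> A" and d1f: "d1 \<in> ln f y"
    using reg_dec[OF Af eA(1) y1X y1nA d1Ay] by blast
  have yE: "y \<in> E" using y E_def by auto
  have fX: "f \<in> X" "y \<in> X" using f yE Af Ef flat_X by auto
  have fe: "f \<noteq> e"
  proof
    assume "f = e" then have "d1 \<in> E" using d1f flat_line[OF Ef eE(1) yE] by auto
    then show False using ED d1D by auto
  qed
  have ye: "y \<noteq> e"
  proof
    assume "y = e" then have "d1 \<in> A" using d1f flat_line[OF Af f eA(1)] by auto
    then show False using AD d1D by auto
  qed
  have fy: "f \<noteq> y" using AE f yE fe by auto
  have d1y: "d1 \<noteq> y" using yE ED d1D by auto
  define M where "M = ln d1 y"
  have "ln y d1 = ln y f" using line_eq[OF fX(2) fX(1)] d1f line_sym fX d1y by auto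
  then have Mf: "M = ln y f" using M_def line_sym d1 fX by auto
  have fM: "f \<in> M" "y \<in> M" "d1 \<in> M" using Mf M_def line_mem1 line_mem2 fX d1 by auto
  have Mfl: "fl M" using M_def line_flat d1 fX by auto
  have MX: "M \<subseteq> X" using Mfl flat_X by auto
  have fD: "f \<notin> D" using f AD by auto
  have d2M: "d2 \<notin> M"
  proof
    assume "d2 \<in> M"
    then have "ln d1 d2 = M" using line_eq[OF d1 fX(2)] M_def d12 by auto
    then show False using fM fD D_def by auto
  qed
  have eM: "e \<notin> M"
  proof
    assume "e \<in> M"
    then have "ln y e = M" using line_eq[OF fX(2) fX(1)] Mf ye by auto
    then have "f \<in> ln y e" using fM by auto
    moreover have "ln e y = E" using line_eq2[OF e(1) y1X] eE(1) yE ye E_def y1A eA by metis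
    ultimately have "f \<in> E" using line_sym e fX by auto
    then show False using AE f fe by auto
  qed
  have eK: "e \<in> H (M \<union> {d2})"
  proof -
    have Kf: "fl (H (M \<union> {d2}))" using H_flat MX d2 by auto
    have "d1 \<in> H (M \<union> {d2})" "d2 \<in> H (M \<union> {d2})" "f \<in> H (M \<union> {d2})" using fM H_sub by auto
    then have "D \<subseteq> H (M \<union> {d2})" using D_def H_line MX d2 by auto
    have fP: "f \<in> P" using f AP by auto
    have "e \<in> H (D \<union> {f})" using exchange[OF Df e(1)] fP fD P_def by auto
    moreover have "H (D \<union> {f}) \<subseteq> H (M \<union> {d2})"
      using H_least[OF Kf] \<open>D \<subseteq> H (M \<union> {d2})\<close> \<open>f \<in> H (M \<union> {d2})\<close> by auto
    ultimately show ?thesis by auto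
  qed
  obtain w m where w: "w \<in> ln d1 d2" and m: "m \<in> M" and em: "e \<in> ln m w"
    using reg_dec[OF Mfl fM(3) d2 d2M eK] by blast
  have wD: "w \<in> D" using w D_def by auto
  have mX: "m \<in> X" "w \<in> X" using m wD MX DX by auto
  have mw: "m \<noteq> w" using em eM m by auto
  have md1: "m \<noteq> d1"
  proof
    assume "m = d1" then have "e \<in> D" using em flat_line[OF Df d1D(1) wD] by auto
    then show False using eD by auto
  qed
  have wd1: "w \<noteq> d1"
  proof
    assume "w = d1" then have "e \<in> M" using em flat_line[OF Mfl m fM(3)] by auto
    then show False using eM by auto
  qed
  have ewm: "e \<in> ln w m" using em line_sym mX by auto
  have lw: "ln d1 w \<subseteq> D" using flat_line[OF Df d1D(1) wD] .
  have ed1w: "e \<notin> ln d1 w" using lw eD by auto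
  have "e \<in> ln w m - ln d1 w" using ewm ed1w by auto
  then obtain u where u: "u \<in> ln d1 m" and uv: "\<forall>v \<in> ln d1 m - {u}. ln v e \<inter> ln d1 w \<noteq> {}"
    using pa d1 mX unfolding proaffine_def by blast
  have "ln d1 m = M" using line_eq[OF d1 fX(2)] m M_def md1 by auto
  then have fyM: "f \<in> ln d1 m" "y \<in> ln d1 m" using fM by auto
  have "ln f e \<inter> ln d1 w = {}" using flat_line[OF Af f eA(1)] lw AD by auto
  then have "f = u" using uv fyM by auto
  moreover have "ln y e \<inter> ln d1 w = {}" using flat_line[OF Ef yE eE(1)] lw ED by auto
  then have "y = u" using uv fyM by auto
  ultimately show False using fy by auto
qed

lemma lines_trans:
  assumes a: "a \<in> X" "a' \<in> X" "a \<noteq> a'" and b: "b \<in> X" "b' \<in> X" "b \<noteq> b'"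
  and c: "c \<in> X" "c' \<in> X" "c \<noteq> c'"
  and h1: "a' \<in> H (ln b b' \<union> {a})" and h2: "b' \<in> H (ln c c' \<union> {b})"
  and dj1: "ln a a' \<inter> ln b b' = {}" and dj2: "ln b b' \<inter> ln c c' = {}"
  shows "a' \<in> H (ln c c' \<union> {a})"
proof -
  define A0 where "A0 = ln a a'"
  define D where "D = ln b b'"
  define E where "E = ln c c'"
  define R where "R = H (E \<union> {b})"
  define P where "P = H (D \<union> {a})"
  define Q where "Q = H (E \<union> {a})"
  have Df: "fl D" "D \<subseteq> X" using D_def line_flat flat_X b by auto
  have Ef: "fl E" "E \<subseteq> X" using E_def line_flat flat_X c by auto
  have Af: "fl A0" "A0 \<subseteq> X" using A0_def line_flat flat_X a by auto
  have Rf: "fl R" "R \<subseteq> X" unfolding R_def using H_flat H_X Ef b by auto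
  have Pf: "fl P" "P \<subseteq> X" unfolding P_def using H_flat H_X Df a by auto
  have Qf: "fl Q" "Q \<subseteq> X" unfolding Q_def using H_flat H_X Ef a by auto
  have mA: "a \<in> A0" "a' \<in> A0" using A0_def line_mem1 line_mem2 a by auto
  have mD: "b \<in> D" "b' \<in> D" using D_def line_mem1 line_mem2 b by auto
  have mE: "c \<in> E" "c' \<in> E" using E_def line_mem1 line_mem2 c by auto
  have AD: "A0 \<inter> D = {}" using dj1 A0_def D_def by auto
  have DE: "D \<inter> E = {}" using dj2 D_def E_def by auto
  have bR: "b \<in> R" "E \<subseteq> R" unfolding R_def using H_sub by auto
  have b'R: "b' \<in> R" using h2 R_def E_def by auto
  have DR: "D \<subseteq> R" using flat_line[OF Rf(1) bR(1) b'R] D_def by auto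
  have aP: "a \<in> P" "D \<subseteq> P" unfolding P_def using H_sub by auto
  have a'P: "a' \<in> P" using h1 P_def D_def by auto
  have aQ: "a \<in> Q" "E \<subseteq> Q" unfolding Q_def using H_sub by auto
  have aD: "a \<notin> D" using mA AD by auto
  have NB: "a' \<notin> ln a b"
  proof
    assume "a' \<in> ln a b"
    moreover have "a' \<noteq> a" using a(3) by simp
    ultimately have "ln a a' = ln a b" by (rule line_eq[OF a(1) b(1)])
    then show False using line_mem2 a b mD AD A0_def by auto
  qed
  show ?thesis
  proof (cases "a \<in> R")
    case True
    have PR: "P \<subseteq> R" unfolding P_def using H_least[OF Rf(1)] DR True by auto
    show ?thesis
    proof (cases "A0 \<inter> E = {}")
      case True
      then have aE: "a \<notin> E" using mA by auto
      have "Q = R" unfolding Q_def R_def using exch_eq[OF Ef(1) b(1)] \<open>a \<in> R\<close> aE R_def by auto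
      then show ?thesis using a'P PR Q_def E_def by auto
    next
      case False
      then obtain e where eA: "e \<in> A0" and eE: "e \<in> E" by auto
      show ?thesis
      proof (cases "A0 = E")
        case True then show ?thesis using mA H_sub E_def by auto
      next
        case False
        have eX: "e \<in> X" using eE Ef by auto
        have eD: "e \<notin> D" using eE DE by auto
        define T where "T = ln b c"
        have Tf: "fl T" "T \<subseteq> X" using T_def line_flat flat_X b c by auto
        have Tm: "b \<in> T" "c \<in> T" using T_def line_mem1 line_mem2 b c by auto
        have RT: "R = H (T \<union> {c'})"
        proof -
          have "R = H (E \<union> {b})" by (fact R_def)
          also have "\<dots> = H (T \<union> {c'})"
          proof (rule H2_eq)
            show "E \<union> {b} \<subseteq> X" "T \<union> {c'} \<subseteq> X" using Ef Tf b c by auto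
            have "c \<in> H (T \<union> {c'})" "c' \<in> H (T \<union> {c'})" using Tm H_sub by auto
            then have "E \<subseteq> H (T \<union> {c'})" using E_def H_line Tf c by auto
            then show "E \<union> {b} \<subseteq> H (T \<union> {c'})" using Tm H_sub by auto
            have "T \<subseteq> R" using flat_line[OF Rf(1)] bR mE T_def by auto
            then show "T \<union> {c'} \<subseteq> H (E \<union> {b})" using R_def bR mE by auto
          qed
          finally show ?thesis .
        qed
        have b'T: "b' \<notin> T"
        proof
          assume "b' \<in> T"
          then have "b' \<in> ln b c" using T_def by simp
          moreover have "b' \<noteq> b" using b(3) by simp
          ultimately have "ln b b' = ln b c" by (rule line_eq[OF b(1) c(1)])
          then show False using line_mem2 b c mE DE D_def by auto
        qed
        have "c' \<in> H (T \<union> {b'})" using exchange[OF Tf(1) c(2)] RT b'R b'T by auto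
        moreover have "H (T \<union> {b'}) \<subseteq> H (D \<union> {c})"
        proof -
          have "b \<in> H (D \<union> {c})" "c \<in> H (D \<union> {c})" using mD H_sub by auto
          then have "T \<subseteq> H (D \<union> {c})" using T_def H_line Df c by auto
          moreover have "b' \<in> H (D \<union> {c})" using mD H_sub by auto
          ultimately show ?thesis using H_least[OF H_flat] Df c by auto
        qed
        ultimately have c'H: "c' \<in> H (D \<union> {c})" by auto
        have RDc: "R = H (D \<union> {c})"
        proof -
          have "D \<union> {c} \<subseteq> R" using DR bR mE by auto
          then have "H (D \<union> {c}) \<subseteq> R" by (rule H_least[OF Rf(1)])
          moreover have "E \<subseteq> H (D \<union> {c})" using H_line[OF _ _ c'H] Df c H_sub E_def by auto
          then have "R \<subseteq> H (D \<union> {c})" unfolding R_def using H_least[OF H_flat] Df c mD H_sub by auto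
          ultimately show ?thesis by auto
        qed
        have RDe: "H (D \<union> {e}) = R" using exch_eq[OF Df(1) c(1)] RDc eE bR eD by auto
        define x1 where "x1 = (if a = e then a' else a)"
        define y1 where "y1 = (if c = e then c' else c)"
        have x1: "x1 \<in> A0" "x1 \<noteq> e" using mA a(3) by (auto simp: x1_def)
        have y1: "y1 \<in> E" "y1 \<noteq> e" using mE c(3) by (auto simp: y1_def)
        have x1X: "x1 \<in> X" "y1 \<in> X" using x1 y1 Af Ef by auto
        have lA: "ln e x1 = A0" unfolding A0_def by (rule line_eq2[OF a(1) a(2) a(3)]) (use eA x1 A0_def in auto)
        have lE: "ln e y1 = E" unfolding E_def by (rule line_eq2[OF c(1) c(2) c(3)]) (use eE y1 E_def in auto)
        have y1A: "y1 \<notin> ln e x1"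
        proof
          assume "y1 \<in> ln e x1"
          then have "ln e y1 = ln e x1" by (rule line_eq[OF eX x1X(1)]) (use y1 in auto)
          then have "ln e y1 = A0" using lA by simp
          then show False using lE False by auto
        qed
        have A0P: "A0 \<subseteq> P" using flat_line[OF Pf(1) aP(1) a'P] A0_def by simp
        have x1H: "x1 \<in> H (ln b b' \<union> {e})" using x1 A0P PR RDe D_def by auto
        have y1H: "y1 \<in> H (ln b b' \<union> {e})" using y1 bR RDe D_def by auto
        have eD': "e \<notin> ln b b'" using eD D_def by simp
        have dA': "ln e x1 \<inter> ln b b' = {}" using lA AD D_def by simp
        have dE': "ln e y1 \<inter> ln b b' = {}" using lE DE D_def by auto
        show ?thesis using playfair[OF b(1) b(2) b(3) eX eD' x1H x1(2) y1H y1A dA' dE'] by blast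
      qed
    qed
  next
    case False
    have bQ: "b \<notin> Q"
    proof
      assume "b \<in> Q"
      moreover have "b \<notin> E" using mD DE by auto
      ultimately have "a \<in> H (E \<union> {b})" using exchange[OF Ef(1) a(1)] Q_def by auto
      then show False using False R_def by auto
    qed
    have a'QB: "a' \<in> H (Q \<union> {b})"
    proof -
      have "R \<subseteq> H (Q \<union> {b})" unfolding R_def using aQ by (intro H_mono) auto
      then have "D \<union> {a} \<subseteq> H (Q \<union> {b})" using DR aQ(1) by auto
      moreover have "Q \<union> {b} \<subseteq> X" using Qf(2) b(1) by auto
      ultimately have "P \<subseteq> H (Q \<union> {b})" unfolding P_def by (intro H_least[OF H_flat])
      then show ?thesis using a'P by auto
    qed
    obtain y q where y: "y \<in> ln a b" and q: "q \<in> Q" and a'q: "a' \<in> ln q y"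
      using reg_dec[OF Qf(1) aQ(1) b(1) bQ a'QB] by blast
    show ?thesis
    proof (rule ccontr)
      assume a'Q: "a' \<notin> H (ln c c' \<union> {a})"
      then have a'Q': "a' \<notin> Q" using Q_def E_def by auto
      have qX: "q \<in> X" "y \<in> X" using q Qf(2) y line_X[OF a(1) b(1)] by auto
      have ya: "y \<noteq> a"
      proof
        assume "y = a" then show False using a'q flat_line[OF Qf(1) q aQ(1)] a'Q' by auto
      qed
      have yP: "y \<in> P" using y flat_line[OF Pf(1) aP(1)] aP mD by auto
      have a'y: "a' \<noteq> y" using NB y by auto
      have qy: "q \<noteq> y" using a'q a'y by auto
      have "a' \<in> ln y q" using a'q line_sym[OF qX] by simp
      moreover have "a' \<noteq> y" using a'y by simp
      ultimately have "ln y a' = ln y q" by (rule line_eq[OF qX(2) qX(1)])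
      then have "q \<in> ln y a'" using line_mem2 qX by auto
      then have qP: "q \<in> P" using flat_line[OF Pf(1) yP a'P] by auto
      have qa: "q \<noteq> a"
      proof
        assume "q = a"
        then have "a' \<in> ln a y" using a'q by auto
        moreover have "ln a y = ln a b" using line_eq[OF a(1) b(1) y ya] by auto
        ultimately show False using NB by auto
      qed
      have qA: "q \<notin> A0"
      proof
        assume qA0: "q \<in> A0"
        have "ln a q = ln a a'" by (rule line_eq2[OF a(1) a(2) a(3)]) (use mA qa qA0 A0_def in auto)
        then have "ln a q = A0" using A0_def by simp
        then show False using flat_line[OF Qf(1) aQ(1) q] mA a'Q' by auto
      qed
      have qD: "ln a q \<inter> D = {}"
      proof (rule ccontr)
        assume "ln a q \<inter> D \<noteq> {}"
        then obtain z where z: "z \<in> ln a q" "z \<in> D" by auto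
        have zQ: "z \<in> Q" using z flat_line[OF Qf(1) aQ(1) q] by auto
        have zE: "z \<notin> E" using z DE by auto
        have "a \<in> H (E \<union> {z})" using exchange[OF Ef(1) a(1)] zQ zE Q_def by auto
        moreover have "E \<union> {z} \<subseteq> R" using bR DR z by auto
        then have "H (E \<union> {z}) \<subseteq> R" by (rule H_least[OF Rf(1)])
        ultimately show False using False by auto
      qed
      have lA: "ln a a' = A0" using A0_def by auto
      have aD': "a \<notin> ln b b'" using aD D_def by simp
      have a'H: "a' \<in> H (ln b b' \<union> {a})" using h1 .
      have qH: "q \<in> H (ln b b' \<union> {a})" using qP P_def D_def by simp
      have qA': "q \<notin> ln a a'" using qA A0_def by simp
      have qD': "ln a q \<inter> ln b b' = {}" using qD D_def by simp
      show False using playfair[OF b(1) b(2) b(3) a(1) aD' a'H _ qH qA' dj1 qD'] a(3) by blast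
    qed
  qed
qed

lemma extract_line:
  assumes Af: "fl A" and Bf: "fl B" and a: "a \<in> A" "a' \<in> A" "a \<noteq> a'"
  and AB: "A \<inter> B = {}" and b: "b \<in> B" and h: "a' \<in> H (B \<union> {a})"
  shows "\<exists>b'\<in>B. b' \<noteq> b \<and> a' \<in> H (ln b b' \<union> {a})"
proof -
  have AX: "A \<subseteq> X" "B \<subseteq> X" using Af Bf flat_X by auto
  have aB: "a \<notin> B" using a AB by auto
  obtain y b' where y: "y \<in> ln b a" and b': "b' \<in> B" and a'y: "a' \<in> ln b' y"
    using reg_dec[OF Bf b _ aB h] a AX by blast
  have X0: "a \<in> X" "a' \<in> X" "b \<in> X" "b' \<in> X" using a b b' AX by auto
  have "y \<in> X" using y line_X[OF X0(3) X0(1)] by blast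
  note X = X0 this
  have bb': "b' \<noteq> b"
  proof
    assume "b' = b"
    then have "a' \<in> ln b a" using a'y flat_line[OF line_flat[OF X(3) X(1)] _ y] line_mem1 X by auto
    then have "a' \<in> ln a b" using line_sym X by auto
    then have "ln a a' = ln a b" using line_eq[OF X(1) X(3)] a by auto
    then have "b \<in> A" using flat_line[OF Af a(1) a(2)] line_mem2 X by auto
    then show False using AB b by auto
  qed
  define K where "K = H (ln b b' \<union> {a})"
  have KX: "ln b b' \<union> {a} \<subseteq> X" using line_X X by auto
  have Km: "b \<in> K" "b' \<in> K" "a \<in> K" unfolding K_def using H_sub line_mem1 line_mem2 X by auto
  have "y \<in> K" using H_line[OF KX] Km y K_def line_sym X by auto
  then have "a' \<in> K" using H_line[OF KX] Km a'y K_def by auto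
  then show ?thesis using b' bb' K_def by auto
qed

lemma subpar_trans:
  assumes Af: "fl A" and Bf: "fl B" and Cf: "fl C"
  and AB: "subparallel X L A B" and BC: "subparallel X L B C"
  shows "subparallel X L A C"
  unfolding subparallel_def
proof (intro ballI subsetI)
  fix a a' assume a: "a \<in> A" "a' \<in> A"
  have X: "A \<subseteq> X" "B \<subseteq> X" "C \<subseteq> X" using Af Bf Cf flat_X by auto
  have sAB: "A \<subseteq> H (B \<union> {a''})" if "a'' \<in> A" for a''
    using AB that unfolding subparallel_def by (metis Un_commute)
  have sBC: "B \<subseteq> H (C \<union> {b''})" if "b'' \<in> B" for b''
    using BC that unfolding subparallel_def by (metis Un_commute)
  show "a' \<in> H ({a} \<union> C)"
  proof (cases "a' = a")
    case True then show ?thesis using H_sub by auto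
  next
    case aa: False
    show ?thesis
    proof (cases "a \<in> B")
      case True
      then have "B \<union> {a} = B" by auto
      then have "A \<subseteq> B" using sAB[OF a(1)] H_flat_eq Bf by auto
      then show ?thesis using sBC[OF True] a by (auto simp: Un_commute)
    next
      case aB: False
      have AB0: "A \<inter> B = {}"
      proof (rule ccontr)
        assume "A \<inter> B \<noteq> {}"
        then obtain z where "z \<in> A" "z \<in> B" by auto
        then have "B \<union> {z} = B" "A \<subseteq> H (B \<union> {z})" using sAB by auto
        then show False using H_flat_eq Bf a aB by auto
      qed
      show ?thesis
      proof (cases "B = {}")
        case True
        then show ?thesis using sAB[OF a(1)] H_single X a aa by auto
      next
        case False
        then obtain b where b: "b \<in> B" by auto
        have aa': "a \<noteq> a'" using aa by simp
        have "a' \<in> H (B \<union> {a})" using sAB a by blast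
        then obtain b' where b': "b' \<in> B" "b' \<noteq> b" and h1: "a' \<in> H (ln b b' \<union> {a})"
          using extract_line[OF Af Bf a(1) a(2) aa' AB0 b] by blast
        show ?thesis
        proof (cases "b \<in> C")
          case True
          then have "C \<union> {b} = C" by auto
          then have "B \<subseteq> C" using sBC[OF b] H_flat_eq Cf by auto
          then have "H (B \<union> {a}) \<subseteq> H ({a} \<union> C)" by (intro H_mono) auto
          then show ?thesis using sAB a by auto
        next
          case bC: False
          have BC0: "B \<inter> C = {}"
          proof (rule ccontr)
            assume "B \<inter> C \<noteq> {}"
            then obtain z where "z \<in> B" "z \<in> C" by auto
            then have "C \<union> {z} = C" "B \<subseteq> H (C \<union> {z})" using sBC by auto
            then show False using H_flat_eq Cf b bC by auto
          qed
          have "C \<noteq> {}"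
          proof
            assume "C = {}"
            then have "B \<subseteq> {b}" using sBC[OF b] H_single X b by auto
            then show False using b' by auto
          qed
          then obtain c where c: "c \<in> C" by auto
          have bb': "b \<noteq> b'" using b' by simp
          have "b' \<in> H (C \<union> {b})" using sBC b b' by blast
          then obtain c' where c': "c' \<in> C" "c' \<noteq> c" and h2: "b' \<in> H (ln c c' \<union> {b})"
            using extract_line[OF Bf Cf b b'(1) bb' BC0 c] by blast
          have dj1: "ln a a' \<inter> ln b b' = {}"
            using flat_line[OF Af a] flat_line[OF Bf b b'(1)] AB0 by auto
          have dj2: "ln b b' \<inter> ln c c' = {}"
            using flat_line[OF Cf c c'(1)] flat_line[OF Bf b b'(1)] BC0 by auto
          have "a' \<in> H (ln c c' \<union> {a})"
          proof (rule lines_trans[OF _ _ aa' _ _ bb' _ _ _ h1 h2 dj1 dj2])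
            show "a \<in> X" "a' \<in> X" "b \<in> X" "b' \<in> X" "c \<in> X" "c' \<in> X"
              using X a b b' c c' by auto
            show "c \<noteq> c'" using c' by simp
          qed
          moreover have "H (ln c c' \<union> {a}) \<subseteq> H ({a} \<union> C)"
            using flat_line[OF Cf c c'(1)] by (intro H_mono) auto
          ultimately show ?thesis by auto
        qed
      qed
    qed
  qed
qed

end

theorem theorem6p5p4:
  fixes X :: "'a set" and L :: "'a set set" and A B C :: "'a set"
  assumes "liner X L" and "proaffine X L" and "regular X L"
    and "flat X L A" and "flat X L B" and "flat X L C"
  shows "(subparallel X L A B \<and> subparallel X L B C \<longrightarrow> subparallel X L A C) \<and>
         (parallel X L A B \<and> parallel X L B C \<longrightarrow> parallel X L A C)"
proof -
  interpret plr X L using assms(1-3) by (rule plr.intro)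
  have 1: "subparallel X L A B \<and> subparallel X L B C \<longrightarrow> subparallel X L A C"
    using subpar_trans[OF assms(4) assms(5) assms(6)] by blast
  have 2: "parallel X L A B \<and> parallel X L B C \<longrightarrow> parallel X L A C"
    unfolding parallel_def
    using subpar_trans[OF assms(4) assms(5) assms(6)] subpar_trans[OF assms(6) assms(5) assms(4)]
    by blast
  show ?thesis using 1 2 by blast
qed

end
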